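(* For all $i,j,k$, $v_k(e_{i\bar j})=v_i(e_{k\bar j})$.
   Context: $g\ge2$, $n=3g-3$. Over a local chart of (a manifold cover of) $\mathcal M_g$ with holomorphic coordinates $s_1,\dots,s_n$, $\partial_i=\partial/\partial s_i$, let $\mathfrak X$ be the universal family with local fiber coordinate $z$. Each fiber carries the hyperbolic metric $\frac{\sqrt{-1}}2\lambda\,dz\wedge d\bar z$ normalized by $\partial_z\partial_{\bar z}\log\lambda=\lambda$. Put $a_i=-\lambda^{-1}\partial_i\partial_{\bar z}\log\lambda$, $v_i=\partial_i+a_i\partial_z$ (the harmonic horizontal lift of $\partial_i$, a vector field on $\mathfrak X$), $g_{i\bar j}=\partial_i\partial_{\bar j}\log\lambda$ and $e_{i\bar j}=g_{i\bar j}-\lambda a_i\overline{a_j}$ (a global function on $\mathfrak X$). *)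

theory Defs
  imports "HOL-Analysis.Analysis"
begin

type_synonym 'n pt = "(complex^'n) \<times> complex"

definition dR :: "('n::finite pt \<Rightarrow> complex) \<Rightarrow> 'n pt \<Rightarrow> 'n pt \<Rightarrow> complex" where
  "dR f w p = vector_derivative (\<lambda>t::real. f (p + t *\<^sub>R w)) (at 0)"

text \<open>Wirtinger derivatives in the base coordinates s_i and the fibre coordinate z.\<close>
definition dS :: "'n::finite \<Rightarrow> ('n pt \<Rightarrow> complex) \<Rightarrow> 'n pt \<Rightarrow> complex" where
  "dS i f p = (dR f (axis i 1, 0) p - \<i> * dR f (axis i \<i>, 0) p) / 2"
definition dSb :: "'n::finite \<Rightarrow> ('n pt \<Rightarrow> complex) \<Rightarrow> 'n pt \<Rightarrow> complex" where
  "dSb i f p = (dR f (axis i 1, 0) p + \<i> * dR f (axis i \<i>, 0) p) / 2"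
definition dZ :: "('n::finite pt \<Rightarrow> complex) \<Rightarrow> 'n pt \<Rightarrow> complex" where
  "dZ f p = (dR f (0, 1) p - \<i> * dR f (0, \<i>) p) / 2"
definition dZb :: "('n::finite pt \<Rightarrow> complex) \<Rightarrow> 'n pt \<Rightarrow> complex" where
  "dZb f p = (dR f (0, 1) p + \<i> * dR f (0, \<i>) p) / 2"

fun iter_dR :: "'n::finite pt list \<Rightarrow> ('n pt \<Rightarrow> complex) \<Rightarrow> 'n pt \<Rightarrow> complex" where
  "iter_dR [] f = f"
| "iter_dR (w # ws) f = dR (iter_dR ws f) w"

definition smooth_on :: "'n::finite pt set \<Rightarrow> ('n pt \<Rightarrow> complex) \<Rightarrow> bool" where
  "smooth_on U f \<longleftrightarrow> (\<forall>ws. iter_dR ws f differentiable_on U)"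

definition logl :: "('n::finite pt \<Rightarrow> real) \<Rightarrow> 'n pt \<Rightarrow> complex" where
  "logl lam p = complex_of_real (ln (lam p))"

definition acoef :: "('n::finite pt \<Rightarrow> real) \<Rightarrow> 'n \<Rightarrow> 'n pt \<Rightarrow> complex" where
  "acoef lam i p = - dS i (dZb (logl lam)) p / complex_of_real (lam p)"

definition vlift :: "('n::finite pt \<Rightarrow> real) \<Rightarrow> 'n \<Rightarrow> ('n pt \<Rightarrow> complex) \<Rightarrow> 'n pt \<Rightarrow> complex" where
  "vlift lam i f p = dS i f p + acoef lam i p * dZ f p"

definition gcoef :: "('n::finite pt \<Rightarrow> real) \<Rightarrow> 'n \<Rightarrow> 'n \<Rightarrow> 'n pt \<Rightarrow> complex" where
  "gcoef lam i j p = dS i (dSb j (logl lam)) p"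

definition ecoef :: "('n::finite pt \<Rightarrow> real) \<Rightarrow> 'n \<Rightarrow> 'n \<Rightarrow> 'n pt \<Rightarrow> complex" where
  "ecoef lam i j p = gcoef lam i j p - complex_of_real (lam p) * acoef lam i p * cnj (acoef lam j p)"

end

theory Submission
  imports Defs
begin


declare split_paired_All [simp del] split_paired_Ex [simp del]

lemma dR_eq:
  assumes "(f has_derivative f') (at p)"
  shows "dR f w p = f' w"
proof -
  have l: "linear f'" using assms has_derivative_linear by blast
  have "((\<lambda>t::real. p + t *\<^sub>R w) has_derivative (\<lambda>t. t *\<^sub>R w)) (at 0)"
    by (auto intro!: derivative_eq_intros)
  moreover have "(f has_derivative f') (at (p + 0 *\<^sub>R w))" using assms by simp
  ultimately have "((\<lambda>t::real. f (p + t *\<^sub>R w)) has_derivative (\<lambda>t. f' (t *\<^sub>R w))) (at 0)"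
    using has_derivative_compose by blast
  moreover have "(\<lambda>t. f' (t *\<^sub>R w)) = (\<lambda>t. t *\<^sub>R f' w)"
    using l by (simp add: linear_scale)
  ultimately have "((\<lambda>t::real. f (p + t *\<^sub>R w)) has_vector_derivative f' w) (at 0)"
    by (simp add: has_vector_derivative_def)
  then show ?thesis unfolding dR_def by (rule vector_derivative_at)
qed

lemma dR_local:
  assumes "open V" "p \<in> V" "\<And>q. q \<in> V \<Longrightarrow> f q = g q"
  shows "dR f w p = dR g w p"
proof -
  let ?T = "(\<lambda>t::real. p + t *\<^sub>R w) -` V"
  have oT: "open ?T"
    by (rule continuous_open_vimage[OF assms(1)]) (intro continuous_intros)
  have 0: "0 \<in> ?T" using assms(2) by simp
  have "\<And>D. ((\<lambda>t. f (p + t *\<^sub>R w)) has_vector_derivative D) (at 0) \<longleftrightarrow>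
             ((\<lambda>t. g (p + t *\<^sub>R w)) has_vector_derivative D) (at 0)"
  proof
    fix D assume "((\<lambda>t. f (p + t *\<^sub>R w)) has_vector_derivative D) (at 0)"
    then show "((\<lambda>t. g (p + t *\<^sub>R w)) has_vector_derivative D) (at 0)"
      by (rule has_vector_derivative_transform_within_open[OF _ oT 0]) (simp add: assms(3))
  next
    fix D assume "((\<lambda>t. g (p + t *\<^sub>R w)) has_vector_derivative D) (at 0)"
    then show "((\<lambda>t. f (p + t *\<^sub>R w)) has_vector_derivative D) (at 0)"
      by (rule has_vector_derivative_transform_within_open[OF _ oT 0]) (simp add: assms(3))
  qed
  then show ?thesis unfolding dR_def vector_derivative_def by simp
qed

lemma diff_at: "f differentiable_on U \<Longrightarrow> open U \<Longrightarrow> p \<in> U \<Longrightarrow> f differentiable (at p)"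
  using differentiable_on_eq_differentiable_at by blast

lemma diff_on_local:
  assumes "f differentiable_on U" "open U" "\<And>q. q \<in> U \<Longrightarrow> f q = g q"
  shows "g differentiable_on U"
proof -
  have "\<forall>x\<in>U. g differentiable (at x)"
  proof
    fix x assume x: "x \<in> U"
    then obtain D where "(f has_derivative D) (at x)"
      using diff_at[OF assms(1,2)] differentiable_def by blast
    then have "(g has_derivative D) (at x)"
      by (rule has_derivative_transform_within_open[OF _ assms(2) x]) (simp add: assms(3))
    then show "g differentiable (at x)" using differentiable_def by blast
  qed
  then show ?thesis using differentiable_on_eq_differentiable_at assms(2) by blast
qed

lemma dR_diff:
  assumes "f differentiable (at p)"
  shows "dR f w p = frechet_derivative f (at p) w"
  using assms dR_eq frechet_derivative_works by blast

fun Ck :: "'n::finite pt set \<Rightarrow> nat \<Rightarrow> ('n pt \<Rightarrow> complex) \<Rightarrow> bool" where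
  "Ck U 0 f = (f differentiable_on U)"
| "Ck U (Suc n) f = (f differentiable_on U \<and> (\<forall>w. Ck U n (dR f w)))"

lemma Ck_diff: "Ck U n f \<Longrightarrow> f differentiable_on U"
  by (cases n) auto

lemma Ck_mono: "Ck U (Suc n) f \<Longrightarrow> Ck U n f"
  by (induction n arbitrary: f) auto

lemma Ck_local:
  assumes "open U" "\<And>q. q \<in> U \<Longrightarrow> f q = g q" "Ck U n f"
  shows "Ck U n g"
  using assms(2,3)
proof (induction n arbitrary: f g)
  case 0
  then have "f differentiable_on U" by simp
  then have "g differentiable_on U" by (rule diff_on_local[OF _ assms(1), where f=f]) (use 0 in auto)
  then show ?case by simp
next
  case (Suc n)
  have e: "\<And>w q. q \<in> U \<Longrightarrow> dR f w q = dR g w q"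
    using dR_local[OF assms(1)] Suc.prems(1) by blast
  have "Ck U n (dR g w)" for w
  proof -
    have "Ck U n (dR f w)" using Suc.prems(2) by simp
    then show ?thesis using Suc.IH[of "dR f w" "dR g w"] e by blast
  qed
  moreover have "g differentiable_on U"
    by (rule diff_on_local[OF _ assms(1), where f=f]) (use Suc.prems in auto)
  ultimately show ?case by simp
qed

lemma dR_const: "dR (\<lambda>_. c) w p = 0"
proof -
  have "((\<lambda>_. c) has_derivative (\<lambda>_. 0)) (at p)" by simp
  from dR_eq[OF this] show ?thesis by simp
qed

lemma dR_add:
  assumes "f differentiable (at q)" "g differentiable (at q)"
  shows "dR (\<lambda>p. f p + g p) w q = dR f w q + dR g w q"
proof -
  obtain Df Dg where "(f has_derivative Df) (at q)" "(g has_derivative Dg) (at q)"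
    using assms differentiable_def by blast
  note d = this
  show ?thesis using dR_eq[OF has_derivative_add[OF d]] dR_eq[OF d(1)] dR_eq[OF d(2)] by simp
qed

lemma dR_mult:
  assumes "f differentiable (at q)" "g differentiable (at q)"
  shows "dR (\<lambda>p. f p * g p) w q = f q * dR g w q + dR f w q * g q"
proof -
  obtain Df Dg where "(f has_derivative Df) (at q)" "(g has_derivative Dg) (at q)"
    using assms differentiable_def by blast
  note d = this
  show ?thesis using dR_eq[OF has_derivative_mult[OF d]] dR_eq[OF d(1)] dR_eq[OF d(2)] by simp
qed

lemma dR_inverse:
  assumes "g differentiable (at q)" "g q \<noteq> 0"
  shows "dR (\<lambda>p. inverse (g p)) w q = - (inverse (g q) * dR g w q * inverse (g q))"
proof -
  obtain Dg where "(g has_derivative Dg) (at q)"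
    using assms differentiable_def by blast
  note d = this
  show ?thesis using dR_eq[OF Deriv.has_derivative_inverse[OF assms(2) d]] dR_eq[OF d] by simp
qed

lemma Ck_const: "Ck (U::'n::finite pt set) n (\<lambda>_. c)"
proof (induction n arbitrary: c)
  case 0 then show ?case by simp
next
  case (Suc n)
  have "dR (\<lambda>_::'n pt. c) w = (\<lambda>_. 0)" for w by (rule ext) (simp add: dR_const)
  then show ?case using Suc by simp
qed

lemma Ck_add:
  assumes "open U"
  shows "Ck U n f \<Longrightarrow> Ck U n g \<Longrightarrow> Ck U n (\<lambda>p. f p + g p)"
proof (induction n arbitrary: f g)
  case 0 then show ?case by (auto intro: differentiable_on_add)
next
  case (Suc n)
  have "Ck U n (dR (\<lambda>p. f p + g p) w)" for w
  proof -
    have "\<And>q. q \<in> U \<Longrightarrow> dR f w q + dR g w q = dR (\<lambda>p. f p + g p) w q"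
    proof -
      fix q assume q: "q \<in> U"
      have "f differentiable (at q)" "g differentiable (at q)"
        using Suc.prems q diff_at assms by auto
      then show "dR f w q + dR g w q = dR (\<lambda>p. f p + g p) w q"
        by (simp add: dR_add)
    qed
    moreover have "Ck U n (\<lambda>q. dR f w q + dR g w q)" by (rule Suc.IH) (use Suc.prems in auto)
    ultimately show ?thesis by (rule Ck_local[OF assms])
  qed
  moreover have "(\<lambda>p. f p + g p) differentiable_on U"
    using Suc.prems by (simp add: differentiable_on_add)
  ultimately show ?case by simp
qed

lemma Ck_mult:
  assumes "open U"
  shows "Ck U n f \<Longrightarrow> Ck U n g \<Longrightarrow> Ck U n (\<lambda>p. f p * g p)"
proof (induction n arbitrary: f g)
  case 0 then show ?case by (auto intro: differentiable_on_mult)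
next
  case (Suc n)
  have "Ck U n (dR (\<lambda>p. f p * g p) w)" for w
  proof -
    have "\<And>q. q \<in> U \<Longrightarrow> f q * dR g w q + dR f w q * g q = dR (\<lambda>p. f p * g p) w q"
    proof -
      fix q assume q: "q \<in> U"
      have "f differentiable (at q)" "g differentiable (at q)"
        using Suc.prems q diff_at assms by auto
      then show "f q * dR g w q + dR f w q * g q = dR (\<lambda>p. f p * g p) w q"
        by (simp add: dR_mult)
    qed
    moreover have "Ck U n (\<lambda>q. f q * dR g w q + dR f w q * g q)"
    proof (rule Ck_add[OF assms])
      show "Ck U n (\<lambda>q. f q * dR g w q)" by (rule Suc.IH) (use Suc.prems Ck_mono in auto)
      show "Ck U n (\<lambda>q. dR f w q * g q)" by (rule Suc.IH) (use Suc.prems Ck_mono in auto)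
    qed
    ultimately show ?thesis by (rule Ck_local[OF assms])
  qed
  moreover have "(\<lambda>p. f p * g p) differentiable_on U"
    using Suc.prems by (simp add: differentiable_on_mult)
  ultimately show ?case by simp
qed

lemma Ck_inverse:
  assumes "open U"
  shows "Ck U n g \<Longrightarrow> (\<forall>q\<in>U. g q \<noteq> 0) \<Longrightarrow> Ck U n (\<lambda>p. inverse (g p))"
proof (induction n arbitrary: g)
  case 0
  have "\<forall>q\<in>U. (\<lambda>p. inverse (g p)) differentiable (at q)"
  proof
    fix q assume q: "q \<in> U"
    have "g differentiable_on U" using 0 by simp
    then have "g differentiable (at q)" using q diff_at[OF _ assms] by blast
    then obtain D where "(g has_derivative D) (at q)"
      using differentiable_def by blast
    then show "(\<lambda>p. inverse (g p)) differentiable (at q)"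
      using Deriv.has_derivative_inverse[of g q] 0 q differentiable_def by blast
  qed
  then show ?case using differentiable_on_eq_differentiable_at[OF assms] Ck.simps(1) by blast
next
  case (Suc n)
  have ih: "Ck U n (\<lambda>p. inverse (g p))" by (rule Suc.IH) (use Suc.prems Ck_mono in auto)
  have "Ck U n (dR (\<lambda>p. inverse (g p)) w)" for w
  proof -
    have "\<And>q. q \<in> U \<Longrightarrow> (\<lambda>_. -1) q * (inverse (g q) * (dR g w q * inverse (g q))) = dR (\<lambda>p. inverse (g p)) w q"
    proof -
      fix q assume q: "q \<in> U"
      have "g differentiable (at q)" "g q \<noteq> 0"
        using Suc.prems q diff_at assms by auto
      then show "(\<lambda>_. -1) q * (inverse (g q) * (dR g w q * inverse (g q))) = dR (\<lambda>p. inverse (g p)) w q"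
        by (simp add: dR_inverse mult.assoc)
    qed
    moreover have "Ck U n (\<lambda>q. (\<lambda>_. -1) q * (inverse (g q) * (dR g w q * inverse (g q))))"
      by (intro Ck_mult[OF assms] Ck_const ih) (use Suc.prems in auto)
    ultimately show ?thesis by (rule Ck_local[OF assms])
  qed
  moreover have "(\<lambda>p. inverse (g p)) differentiable_on U"
    using ih Ck_diff by blast
  ultimately show ?case by simp
qed

definition sm :: "'n::finite pt set \<Rightarrow> ('n pt \<Rightarrow> complex) \<Rightarrow> bool" where
  "sm U f \<longleftrightarrow> (\<forall>n. Ck U n f)"

lemma iter_dR_snoc: "iter_dR (ws @ [w]) f = iter_dR ws (dR f w)"
  by (induction ws) auto

lemma smooth_sm: "smooth_on U f \<Longrightarrow> sm U f"
proof -
  assume a: "smooth_on U f"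
  have "Ck U n f" for n
    using a
  proof (induction n arbitrary: f)
    case 0
    have "iter_dR [] f differentiable_on U" using 0 unfolding smooth_on_def by blast
    then show ?case by simp
  next
    case (Suc n)
    have "smooth_on U (dR f w)" for w
      unfolding smooth_on_def
    proof
      fix ws
      have "iter_dR (ws @ [w]) f differentiable_on U" using Suc.prems unfolding smooth_on_def by blast
      then show "iter_dR ws (dR f w) differentiable_on U" by (simp add: iter_dR_snoc)
    qed
    then have "\<forall>w. Ck U n (dR f w)" using Suc.IH by blast
    moreover have "iter_dR [] f differentiable_on U" using Suc.prems unfolding smooth_on_def by blast
    ultimately show ?case by simp
  qed
  then show ?thesis by (simp add: sm_def)
qed

lemma sm_diff: "sm U f \<Longrightarrow> f differentiable_on U"
  unfolding sm_def using Ck_diff by blast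
lemma sm_dR: "sm U f \<Longrightarrow> sm U (dR f w)"
  unfolding sm_def using Ck.simps(2) by blast
lemma sm_local: "open U \<Longrightarrow> (\<And>q. q \<in> U \<Longrightarrow> f q = g q) \<Longrightarrow> sm U f \<Longrightarrow> sm U g"
  unfolding sm_def using Ck_local by blast
lemma sm_add: "open U \<Longrightarrow> sm U f \<Longrightarrow> sm U g \<Longrightarrow> sm U (\<lambda>p. f p + g p)"
  unfolding sm_def using Ck_add by blast
lemma sm_mult: "open U \<Longrightarrow> sm U f \<Longrightarrow> sm U g \<Longrightarrow> sm U (\<lambda>p. f p * g p)"
  unfolding sm_def using Ck_mult by blast
lemma sm_const: "sm U (\<lambda>_. c)"
  unfolding sm_def using Ck_const by blast
lemma sm_inverse: "open U \<Longrightarrow> sm U g \<Longrightarrow> (\<forall>q\<in>U. g q \<noteq> 0) \<Longrightarrow> sm U (\<lambda>p. inverse (g p))"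
  unfolding sm_def using Ck_inverse by blast



lemma line_deriv:
  fixes f :: "'a::real_normed_vector \<Rightarrow> 'b::real_normed_vector"
  assumes "(f has_derivative D) (at (a + t *\<^sub>R u))"
  shows "((\<lambda>t. f (a + t *\<^sub>R u)) has_derivative (\<lambda>h. h *\<^sub>R D u)) (at t within S)"
proof -
  have l: "linear D" using assms has_derivative_linear by blast
  have "((\<lambda>t::real. a + t *\<^sub>R u) has_derivative (\<lambda>h. h *\<^sub>R u)) (at t within S)"
    by (auto intro!: derivative_eq_intros)
  from has_derivative_compose[OF this assms]
  have "((\<lambda>t. f (a + t *\<^sub>R u)) has_derivative (\<lambda>h. D (h *\<^sub>R u))) (at t within S)" .
  moreover have "(\<lambda>h. D (h *\<^sub>R u)) = (\<lambda>h. h *\<^sub>R D u)"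
    using l by (simp add: linear_scale)
  ultimately show ?thesis by simp
qed

lemma schwarz_half:
  fixes f :: "'a::real_normed_vector \<Rightarrow> complex"
  assumes "open U" "p \<in> U"
   and df: "\<And>q. q \<in> U \<Longrightarrow> (f has_derivative Df q) (at q)"
   and hu: "((\<lambda>q. Df q u) has_derivative Hu) (at p)"
   and e: "e > 0"
  shows "\<exists>d>0. \<forall>s. 0 < s \<and> s < d \<longrightarrow>
     norm (f (p + s *\<^sub>R u + s *\<^sub>R w) - f (p + s *\<^sub>R u) - f (p + s *\<^sub>R w) + f p - (s * s) *\<^sub>R Hu w)
       \<le> e * s * s * (2 * norm u + norm w)"
proof -
  have lin: "linear Hu" using hu has_derivative_linear by blast
  obtain d1 where d1: "d1 > 0" and
    d1H: "\<And>y. norm (y - p) < d1 \<Longrightarrow> norm (Df y u - Df p u - Hu (y - p)) \<le> e * norm (y - p)"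
    using hu e unfolding has_derivative_at_alt by blast
  obtain r where r: "r > 0" and rU: "ball p r \<subseteq> U"
    using assms(1,2) open_contains_ball by blast
  define d where "d = min d1 r / (norm u + norm w + 1)"
  have np: "norm u + norm w + 1 > 0" by (smt (verit) norm_ge_zero)
  have dpos: "d > 0" unfolding d_def using d1 r np by (intro divide_pos_pos) auto
  show ?thesis
  proof (intro exI conjI allI impI)
    show "d > 0" by (fact dpos)
    fix s :: real assume s: "0 < s \<and> s < d"
    have sm: "s * (norm u + norm w) < min d1 r"
    proof -
      have "s * (norm u + norm w) \<le> s * (norm u + norm w + 1)" using s by simp
      also have "\<dots> < d * (norm u + norm w + 1)"
        using s np by (intro mult_strict_right_mono) auto
      also have "\<dots> = min d1 r" unfolding d_def using np by simp
      finally show ?thesis .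
    qed
    define B where "B = e * s * (2 * norm u + norm w)"
    define G where "G t = f ((p + s *\<^sub>R w) + t *\<^sub>R u) - f (p + t *\<^sub>R u) - (t * s) *\<^sub>R Hu w" for t
    define G' where "G' t = (\<lambda>h::real. h *\<^sub>R (Df ((p + s *\<^sub>R w) + t *\<^sub>R u) u - Df (p + t *\<^sub>R u) u - s *\<^sub>R Hu w))" for t
    have nb: "norm (t *\<^sub>R u + s' *\<^sub>R w) < min d1 r" if "0 \<le> t" "t \<le> s" "0 \<le> s'" "s' \<le> s" for t s'
    proof -
      have "norm (t *\<^sub>R u + s' *\<^sub>R w) \<le> t * norm u + s' * norm w"
        using that norm_triangle_ineq[of "t *\<^sub>R u" "s' *\<^sub>R w"] by simp
      also have "\<dots> \<le> s * norm u + s * norm w"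
        using that by (intro add_mono mult_right_mono) auto
      finally show ?thesis using sm by (simp add: algebra_simps)
    qed
    have inU: "p + (t *\<^sub>R u + s' *\<^sub>R w) \<in> U" if "0 \<le> t" "t \<le> s" "0 \<le> s'" "s' \<le> s" for t s'
    proof -
      have "p + (t *\<^sub>R u + s' *\<^sub>R w) \<in> ball p r"
        using nb[OF that] by (simp add: dist_norm norm_minus_commute add.commute)
      then show ?thesis using rU by blast
    qed
    have derG: "(G has_derivative G' t) (at t within {0..s})" if t: "t \<in> {0..s}" for t
    proof -
      have y1: "(p + s *\<^sub>R w) + t *\<^sub>R u \<in> U" using inU[of t s] t s by (simp add: add_ac)
      have y2: "p + t *\<^sub>R u \<in> U" using inU[of t 0] t s by simp
      have "((\<lambda>t. f ((p + s *\<^sub>R w) + t *\<^sub>R u)) has_derivative (\<lambda>h. h *\<^sub>R Df ((p + s *\<^sub>R w) + t *\<^sub>R u) u)) (at t within {0..s})"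
        by (rule line_deriv[OF df[OF y1]])
      moreover have "((\<lambda>t. f (p + t *\<^sub>R u)) has_derivative (\<lambda>h. h *\<^sub>R Df (p + t *\<^sub>R u) u)) (at t within {0..s})"
        by (rule line_deriv[OF df[OF y2]])
      moreover have "((\<lambda>t. (t * s) *\<^sub>R Hu w) has_derivative (\<lambda>h. h *\<^sub>R (s *\<^sub>R Hu w))) (at t within {0..s})"
        by (auto intro!: derivative_eq_intros)
      ultimately have "(G has_derivative (\<lambda>h. h *\<^sub>R Df ((p + s *\<^sub>R w) + t *\<^sub>R u) u - h *\<^sub>R Df (p + t *\<^sub>R u) u - h *\<^sub>R (s *\<^sub>R Hu w))) (at t within {0..s})"
        unfolding G_def by (intro has_derivative_diff)
      then show ?thesis unfolding G'_def by (simp add: algebra_simps)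
    qed
    have bnd: "onorm (G' t) \<le> B" if t: "t \<in> {0..s}" for t
    proof -
      define c where "c = Df ((p + s *\<^sub>R w) + t *\<^sub>R u) u - Df (p + t *\<^sub>R u) u - s *\<^sub>R Hu w"
      have "onorm (G' t) = onorm (\<lambda>h::real. h) * norm c"
        unfolding G'_def c_def by (rule onorm_scaleR_left) (rule bounded_linear_ident)
      also have "\<dots> = norm c" by (simp add: onorm_id)
      also have "norm c \<le> B"
      proof -
        let ?y1 = "(p + s *\<^sub>R w) + t *\<^sub>R u" and ?y2 = "p + t *\<^sub>R u"
        have n1: "norm (?y1 - p) < d1" using nb[of t s] t s by (simp add: add_ac)
        have n2: "norm (?y2 - p) < d1" using nb[of t 0] t s by simp
        have "Hu (?y1 - p) - Hu (?y2 - p) = s *\<^sub>R Hu w"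
        proof -
          have "?y1 - p = t *\<^sub>R u + s *\<^sub>R w" "?y2 - p = t *\<^sub>R u" by (simp_all add: algebra_simps)
          then show ?thesis using lin by (simp add: linear_add linear_scale)
        qed
        then have ceq: "c = (Df ?y1 u - Df p u - Hu (?y1 - p)) - (Df ?y2 u - Df p u - Hu (?y2 - p))"
          unfolding c_def by (simp add: algebra_simps)
        have "norm c \<le> e * norm (?y1 - p) + e * norm (?y2 - p)"
          unfolding ceq using d1H[OF n1] d1H[OF n2] norm_triangle_ineq4 by (smt (verit))
        also have "\<dots> \<le> e * (t * norm u + s * norm w) + e * (t * norm u)"
        proof -
          have "norm (?y1 - p) \<le> t * norm u + s * norm w"
            using norm_triangle_ineq[of "t *\<^sub>R u" "s *\<^sub>R w"] t s by (simp add: algebra_simps)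
          moreover have "norm (?y2 - p) = t * norm u" using t by simp
          ultimately show ?thesis using e by (intro add_mono mult_left_mono) auto
        qed
        also have "\<dots> \<le> B"
        proof -
          have "t * norm u \<le> s * norm u" using t by (intro mult_right_mono) auto
          then show ?thesis unfolding B_def using e
            by (smt (verit, best) distrib_left mult.assoc mult_left_mono norm_ge_zero)
        qed
        finally show ?thesis .
      qed
      finally show ?thesis .
    qed
    have "norm (G s - G 0) \<le> B * norm (s - 0)"
      by (rule differentiable_bound[OF convex_real_interval(5) derG bnd]) (use s in auto)
    moreover have "G s - G 0 = f (p + s *\<^sub>R u + s *\<^sub>R w) - f (p + s *\<^sub>R u) - f (p + s *\<^sub>R w) + f p - (s * s) *\<^sub>R Hu w"
      unfolding G_def by (simp add: algebra_simps)
    ultimately show "norm (f (p + s *\<^sub>R u + s *\<^sub>R w) - f (p + s *\<^sub>R u) - f (p + s *\<^sub>R w) + f p - (s * s) *\<^sub>R Hu w)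
       \<le> e * s * s * (2 * norm u + norm w)"
      using s unfolding B_def by (simp add: algebra_simps)
  qed
qed

lemma schwarz:
  fixes f :: "'a::real_normed_vector \<Rightarrow> complex"
  assumes "open U" "p \<in> U"
   and df: "\<And>q. q \<in> U \<Longrightarrow> (f has_derivative Df q) (at q)"
   and hu: "((\<lambda>q. Df q u) has_derivative Hu) (at p)"
   and hw: "((\<lambda>q. Df q w) has_derivative Hw) (at p)"
  shows "Hu w = Hw u"
proof (rule ccontr)
  assume ne: "Hu w \<noteq> Hw u"
  define K where "K = norm u + norm w + 1"
  have K: "K > 0" unfolding K_def by (smt (verit) norm_ge_zero)
  define e where "e = norm (Hu w - Hw u) / (6 * K)"
  have e: "e > 0" unfolding e_def using ne K by simp
  obtain d1 where d1: "d1 > 0" and D1: "\<And>s. 0 < s \<and> s < d1 \<Longrightarrow>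
     norm (f (p + s *\<^sub>R u + s *\<^sub>R w) - f (p + s *\<^sub>R u) - f (p + s *\<^sub>R w) + f p - (s * s) *\<^sub>R Hu w)
       \<le> e * s * s * (2 * norm u + norm w)"
    using schwarz_half[OF assms(1,2) df hu e, of w] by blast
  obtain d2 where d2: "d2 > 0" and D2: "\<And>s. 0 < s \<and> s < d2 \<Longrightarrow>
     norm (f (p + s *\<^sub>R w + s *\<^sub>R u) - f (p + s *\<^sub>R w) - f (p + s *\<^sub>R u) + f p - (s * s) *\<^sub>R Hw u)
       \<le> e * s * s * (2 * norm w + norm u)"
    using schwarz_half[OF assms(1,2) df hw e, of u] by blast
  define s where "s = min d1 d2 / 2"
  have s: "0 < s" "s < d1" "s < d2" unfolding s_def using d1 d2 by auto
  define X where "X = f (p + s *\<^sub>R u + s *\<^sub>R w) - f (p + s *\<^sub>R u) - f (p + s *\<^sub>R w) + f p"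
  have X2: "X = f (p + s *\<^sub>R w + s *\<^sub>R u) - f (p + s *\<^sub>R w) - f (p + s *\<^sub>R u) + f p"
    unfolding X_def by (simp add: add_ac)
  have a1: "norm (X - (s * s) *\<^sub>R Hu w) \<le> e * s * s * (2 * norm u + norm w)"
    using D1[of s] s unfolding X_def by simp
  have a2: "norm (X - (s * s) *\<^sub>R Hw u) \<le> e * s * s * (2 * norm w + norm u)"
    using D2[of s] s unfolding X2 by simp
  have "norm ((s * s) *\<^sub>R (Hu w - Hw u)) \<le> norm (X - (s * s) *\<^sub>R Hu w) + norm (X - (s * s) *\<^sub>R Hw u)"
    by (smt (verit, best) norm_minus_commute norm_triangle_ineq4 scaleR_right_diff_distrib diff_diff_eq2 diff_add_cancel)
  also have "\<dots> \<le> e * s * s * (3 * (norm u + norm w))"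
    using a1 a2 by (simp add: algebra_simps)
  also have "\<dots> < (s * s) * norm (Hu w - Hw u)"
  proof -
    have "e * (3 * (norm u + norm w)) < norm (Hu w - Hw u)"
    proof -
      have "e * (3 * (norm u + norm w)) \<le> e * (6 * K)"
        using e unfolding K_def by (intro mult_left_mono) auto
      also have "\<dots> = norm (Hu w - Hw u)" unfolding e_def using K by simp
      finally have "e * (3 * (norm u + norm w)) \<le> norm (Hu w - Hw u)" .
      moreover have "e * (3 * (norm u + norm w)) \<noteq> norm (Hu w - Hw u)"
      proof
        assume "e * (3 * (norm u + norm w)) = norm (Hu w - Hw u)"
        then have "e * (3 * (norm u + norm w)) = e * (6 * K)" unfolding e_def using K by simp
        then have "3 * (norm u + norm w) = 6 * K" using e by simp
        then show False unfolding K_def by (smt (verit) norm_ge_zero)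
      qed
      ultimately show ?thesis by simp
    qed
    then show ?thesis using s(1)
      by (smt (verit, ccfv_SIG) mult.commute mult.left_commute mult_pos_pos mult_strict_left_mono)
  qed
  finally show False using s(1) by simp
qed



lemma dR_comm:
  assumes U: "open U" and p: "p \<in> U" and f: "f differentiable_on U"
    and fu: "dR f u differentiable_on U" and fw: "dR f w differentiable_on U"
  shows "dR (dR f u) w p = dR (dR f w) u p"
proof -
  define Df where "Df q = frechet_derivative f (at q)" for q
  have df: "\<And>q. q \<in> U \<Longrightarrow> (f has_derivative Df q) (at q)"
    unfolding Df_def using diff_at[OF f U] frechet_derivative_works by blast
  have eq: "\<And>q v. q \<in> U \<Longrightarrow> dR f v q = Df q v" using df dR_eq by blast
  obtain H1 where H1: "(dR f u has_derivative H1) (at p)"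
    using diff_at[OF fu U p] differentiable_def by blast
  obtain H2 where H2: "(dR f w has_derivative H2) (at p)"
    using diff_at[OF fw U p] differentiable_def by blast
  have h1: "((\<lambda>q. Df q u) has_derivative H1) (at p)"
    by (rule has_derivative_transform_within_open[OF H1 U p]) (simp add: eq)
  have h2: "((\<lambda>q. Df q w) has_derivative H2) (at p)"
    by (rule has_derivative_transform_within_open[OF H2 U p]) (simp add: eq)
  have "H1 w = H2 u" by (rule schwarz[OF U p df h1 h2])
  then show ?thesis using dR_eq[OF H1] dR_eq[OF H2] by simp
qed

definition W :: "complex \<Rightarrow> 'n::finite pt \<Rightarrow> 'n pt \<Rightarrow> ('n pt \<Rightarrow> complex) \<Rightarrow> 'n pt \<Rightarrow> complex" where
  "W c a b f p = (dR f a p + c * dR f b p) / 2"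

lemma dS_W: "dS i f p = W (- \<i>) (axis i 1, 0) (axis i \<i>, 0) f p"
  unfolding dS_def W_def by simp
lemma dSb_W: "dSb i f p = W \<i> (axis i 1, 0) (axis i \<i>, 0) f p"
  unfolding dSb_def W_def by simp
lemma dZ_W: "dZ f p = W (- \<i>) (0, 1) (0, \<i>) f p"
  unfolding dZ_def W_def by simp
lemma dZb_W: "dZb f p = W \<i> (0, 1) (0, \<i>) f p"
  unfolding dZb_def W_def by simp

lemma W_has: "(f has_derivative D) (at p) \<Longrightarrow> W c a b f p = (D a + c * D b) / 2"
  unfolding W_def using dR_eq by metis

lemma W_local: "open V \<Longrightarrow> p \<in> V \<Longrightarrow> (\<And>q. q \<in> V \<Longrightarrow> f q = g q) \<Longrightarrow> W c a b f p = W c a b g p"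
  unfolding W_def using dR_local by metis

lemma sm_W:
  assumes U: "open U" and f: "sm U f"
  shows "sm U (W c a b f)"
proof -
  have "sm U (\<lambda>p. (\<lambda>_. 1/2) p * dR f a p + (\<lambda>_. c/2) p * dR f b p)"
    by (intro sm_add[OF U] sm_mult[OF U] sm_const sm_dR f)
  then show ?thesis by (rule sm_local[OF U, rotated]) (simp add: W_def field_simps)
qed

lemma dR_W:
  assumes "dR f a differentiable (at p)" "dR f b differentiable (at p)"
  shows "dR (W c a b f) x p = (dR (dR f a) x p + c * dR (dR f b) x p) / 2"
proof -
  obtain Da Db where "(dR f a has_derivative Da) (at p)" "(dR f b has_derivative Db) (at p)"
    using assms differentiable_def by blast
  note d = this
  have "((\<lambda>q. (dR f a q + c * dR f b q) / 2) has_derivative (\<lambda>h. (Da h + c * Db h) / 2)) (at p)"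
    using d by (auto intro!: derivative_eq_intros)
  then have "dR (\<lambda>q. (dR f a q + c * dR f b q) / 2) x p = (Da x + c * Db x) / 2"
    by (rule dR_eq)
  then show ?thesis using dR_eq[OF d(1)] dR_eq[OF d(2)] unfolding W_def[abs_def] by simp
qed

lemma sm_diff_at: "sm U f \<Longrightarrow> open U \<Longrightarrow> p \<in> U \<Longrightarrow> f differentiable (at p)"
  using sm_diff diff_at by blast

lemma W_comm:
  assumes U: "open U" and p: "p \<in> U" and f: "sm U f"
  shows "W c1 a1 b1 (W c2 a2 b2 f) p = W c2 a2 b2 (W c1 a1 b1 f) p"
proof -
  have d: "\<And>v. dR f v differentiable (at p)" using sm_diff_at[OF sm_dR[OF f] U p] .
  have dd: "\<And>v. dR f v differentiable_on U" using sm_diff[OF sm_dR[OF f]] .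
  have c: "\<And>u v. dR (dR f u) v p = dR (dR f v) u p"
    using dR_comm[OF U p sm_diff[OF f] dd dd] .
  show ?thesis
    unfolding W_def[of c1 a1 b1 "W c2 a2 b2 f"] W_def[of c2 a2 b2 "W c1 a1 b1 f"] dR_W[OF d d]
    by (simp add: c field_simps)
qed



lemma dR_sub:
  assumes "f differentiable (at q)" "g differentiable (at q)"
  shows "dR (\<lambda>p. f p - g p) w q = dR f w q - dR g w q"
proof -
  obtain Df Dg where "(f has_derivative Df) (at q)" "(g has_derivative Dg) (at q)"
    using assms differentiable_def by blast
  note d = this
  show ?thesis using dR_eq[OF has_derivative_diff[OF d]] dR_eq[OF d(1)] dR_eq[OF d(2)] by simp
qed

lemma W_sub: "f differentiable (at q) \<Longrightarrow> g differentiable (at q) \<Longrightarrow>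
   W c a b (\<lambda>p. f p - g p) q = W c a b f q - W c a b g q"
  unfolding W_def by (simp add: dR_sub field_simps)

lemma W_mult: "f differentiable (at q) \<Longrightarrow> g differentiable (at q) \<Longrightarrow>
   W c a b (\<lambda>p. f p * g p) q = f q * W c a b g q + W c a b f q * g q"
  unfolding W_def by (simp add: dR_mult field_simps)

lemma W_inverse: "g differentiable (at q) \<Longrightarrow> g q \<noteq> 0 \<Longrightarrow>
   W c a b (\<lambda>p. inverse (g p)) q = - (W c a b g q / (g q * g q))"
  unfolding W_def dR_inverse[of g q] by (simp add: field_simps)

lemma W_E:
  assumes "f1 differentiable (at p)" "A differentiable (at p)" "B differentiable (at p)"
    "L differentiable (at p)" "L p \<noteq> 0"
  shows "W c a b (\<lambda>q. f1 q - A q * B q / L q) p =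
     W c a b f1 p - (W c a b A p * B p + A p * W c a b B p) / L p + A p * B p * W c a b L p / (L p * L p)"
proof -
  have dAB: "(\<lambda>q. A q * B q) differentiable (at p)" using assms(2,3) by (rule differentiable_mult)
  have dI: "(\<lambda>q. inverse (L q)) differentiable (at p)" using assms(4,5) by (rule differentiable_inverse)
  have dABI: "(\<lambda>q. A q * B q * inverse (L q)) differentiable (at p)"
    using dAB dI by (rule differentiable_mult)
  have e1: "(\<lambda>q. f1 q - A q * B q / L q) = (\<lambda>q. f1 q - A q * B q * inverse (L q))"
    by (simp add: divide_inverse)
  have "W c a b (\<lambda>q. f1 q - A q * B q * inverse (L q)) p = W c a b f1 p - W c a b (\<lambda>q. A q * B q * inverse (L q)) p"
    by (rule W_sub[OF assms(1) dABI])
  also have "W c a b (\<lambda>q. A q * B q * inverse (L q)) p = (A p * B p) * W c a b (\<lambda>q. inverse (L q)) p + W c a b (\<lambda>q. A q * B q) p * inverse (L p)"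
    by (rule W_mult[OF dAB dI])
  also have "W c a b (\<lambda>q. A q * B q) p = A p * W c a b B p + W c a b A p * B p"
    by (rule W_mult[OF assms(2,3)])
  also have "W c a b (\<lambda>q. inverse (L q)) p = - (W c a b L p / (L p * L p))"
    by (rule W_inverse[OF assms(4,5)])
  finally have h: "W c a b (\<lambda>q. f1 q - A q * B q * inverse (L q)) p = W c a b f1 p -
    (A p * B p * - (W c a b L p / (L p * L p)) + (A p * W c a b B p + W c a b A p * B p) * inverse (L p))" .
  show ?thesis unfolding e1 h using assms(5) by (simp add: field_simps)
qed

lemma phi_deriv:
  fixes lam :: "'n::finite pt \<Rightarrow> real"
  assumes U: "open U" and q: "q \<in> U" and pos: "\<forall>p\<in>U. lam p > 0"
    and dL: "((\<lambda>p. complex_of_real (lam p)) has_derivative DL) (at q)"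
  shows "(logl lam has_derivative (\<lambda>h. inverse (complex_of_real (lam q)) * DL h)) (at q)"
proof -
  have nz: "complex_of_real (lam q) \<notin> \<real>\<^sub>\<le>\<^sub>0" using pos q by (auto simp: nonpos_Reals_def)
  have "(Ln has_derivative (*) (inverse (complex_of_real (lam q)))) (at (complex_of_real (lam q)))"
    using has_field_derivative_Ln[OF nz] unfolding has_field_derivative_def .
  from has_derivative_compose[OF dL this]
  have "((\<lambda>p. Ln (complex_of_real (lam p))) has_derivative (\<lambda>h. inverse (complex_of_real (lam q)) * DL h)) (at q)" .
  then show ?thesis
    by (rule has_derivative_transform_within_open[OF _ U q]) (use pos in \<open>simp add: logl_def Ln_of_real\<close>)
qed

lemma dR_phi:
  fixes lam :: "'n::finite pt \<Rightarrow> real"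
  assumes U: "open U" and q: "q \<in> U" and pos: "\<forall>p\<in>U. lam p > 0"
    and dL: "(\<lambda>p. complex_of_real (lam p)) differentiable (at q)"
  shows "dR (logl lam) w q = dR (\<lambda>p. complex_of_real (lam p)) w q * inverse (complex_of_real (lam q))"
    and "logl lam differentiable (at q)"
proof -
  obtain DL where d: "((\<lambda>p. complex_of_real (lam p)) has_derivative DL) (at q)"
    using dL differentiable_def by blast
  show "dR (logl lam) w q = dR (\<lambda>p. complex_of_real (lam p)) w q * inverse (complex_of_real (lam q))"
    using dR_eq[OF phi_deriv[OF U q pos d]] dR_eq[OF d] by simp
  show "logl lam differentiable (at q)" using phi_deriv[OF U q pos d] differentiable_def by blast
qed

lemma W_phi:
  fixes lam :: "'n::finite pt \<Rightarrow> real"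
  assumes U: "open U" and q: "q \<in> U" and pos: "\<forall>p\<in>U. lam p > 0"
    and dL: "(\<lambda>p. complex_of_real (lam p)) differentiable (at q)"
  shows "W c a b (logl lam) q = W c a b (\<lambda>p. complex_of_real (lam p)) q / complex_of_real (lam q)"
  unfolding W_def dR_phi(1)[OF assms]
  by (cases "complex_of_real (lam q) = 0") (simp_all add: field_simps)

lemma sm_phi:
  fixes lam :: "'n::finite pt \<Rightarrow> real"
  assumes U: "open U" and pos: "\<forall>p\<in>U. lam p > 0"
    and sL: "sm U (\<lambda>p. complex_of_real (lam p))"
  shows "sm U (logl lam)"
  unfolding sm_def
proof
  fix n
  have dd: "logl lam differentiable_on U"
    using dR_phi(2)[OF U _ pos sm_diff_at[OF sL U]] differentiable_on_eq_differentiable_at[OF U] by blast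
  show "Ck U n (logl lam)"
  proof (cases n)
    case 0 then show ?thesis using dd by simp
  next
    case (Suc m)
    have "Ck U m (dR (logl lam) w)" for w
    proof -
      have nz: "\<forall>q\<in>U. complex_of_real (lam q) \<noteq> 0" using pos by auto
      have "Ck U m (\<lambda>q. dR (\<lambda>p. complex_of_real (lam p)) w q * inverse (complex_of_real (lam q)))"
        using sm_mult[OF U sm_dR[OF sL] sm_inverse[OF U sL nz]] unfolding sm_def by blast
      moreover have "\<And>q. q \<in> U \<Longrightarrow> dR (\<lambda>p. complex_of_real (lam p)) w q * inverse (complex_of_real (lam q)) = dR (logl lam) w q"
        using dR_phi(1)[OF U _ pos sm_diff_at[OF sL U]] by simp
      ultimately show ?thesis by (rule Ck_local[OF U, rotated])
    qed
    then show ?thesis using dd Suc by (simp del: Ck.simps(1))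
  qed
qed



lemma dS_fun: "dS i = W (- \<i>) (axis i 1, 0) (axis i \<i>, 0)"
  by (intro ext) (simp add: dS_W)
lemma dSb_fun: "dSb i = W \<i> (axis i 1, 0) (axis i \<i>, 0)"
  by (intro ext) (simp add: dSb_W)
lemma dZ_fun: "dZ = W (- \<i>) (0, 1) (0, \<i>)"
  by (intro ext) (simp add: dZ_W)
lemma dZb_fun: "dZb = W \<i> (0, 1) (0, \<i>)"
  by (intro ext) (simp add: dZb_W)

lemma real_dR:
  assumes V: "open V" and q: "q \<in> V" and r: "\<forall>x\<in>V. cnj (f x) = f x" and d: "f differentiable (at q)"
  shows "cnj (dR f u q) = dR f u q"
proof -
  obtain D where D: "(f has_derivative D) (at q)" using d differentiable_def by blast
  have "((\<lambda>x. cnj (f x)) has_derivative (\<lambda>h. cnj (D h))) (at q)" using D by (rule has_derivative_cnj)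
  then have D2: "(f has_derivative (\<lambda>h. cnj (D h))) (at q)"
    by (rule has_derivative_transform_within_open[OF _ V q]) (use r in auto)
  show ?thesis using dR_eq[OF D] dR_eq[OF D2] by simp
qed

lemma conj_lemma:
  assumes U: "open U" and p: "p \<in> U" and s: "sm U f" and r: "\<forall>x. cnj (f x) = f x"
  shows "cnj (dS j (dZb f) p) = dSb j (dZ f) p"
proof -
  have d: "\<And>v. dR f v differentiable (at p)" using sm_diff_at[OF sm_dR[OF s] U p] .
  have r1: "\<forall>x\<in>U. cnj (dR f v x) = dR f v x" for v
    using real_dR[OF U _ _ sm_diff_at[OF s U]] r by blast
  have r2: "cnj (dR (dR f v) x p) = dR (dR f v) x p" for v x
    using real_dR[OF U p r1 d] .
  show ?thesis
    unfolding dS_fun dSb_fun dZ_fun dZb_fun W_def[of _ _ _ "W _ _ _ f"] dR_W[OF d d]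
    by (simp add: r2 field_simps)
qed



lemma sm_ops:
  assumes "open U" "sm U f"
  shows "sm U (dS i f)" "sm U (dSb i f)" "sm U (dZ f)" "sm U (dZb f)"
  unfolding dS_fun dSb_fun dZ_fun dZb_fun using sm_W[OF assms] by auto

lemma main_formula:
  fixes lam :: "'n::finite pt \<Rightarrow> real"
  assumes U: "open U" and pos: "\<forall>p\<in>U. lam p > 0"
    and sL: "sm U (\<lambda>p. complex_of_real (lam p))"
    and curv: "\<forall>p\<in>U. dZ (dZb (logl lam)) p = complex_of_real (lam p)"
    and p: "p \<in> U"
  shows "vlift lam k (ecoef lam i j) p =
    dS k (dS i (dSb j (logl lam))) p
    - (dS k (dS i (dZb (logl lam))) p * dSb j (dZ (logl lam)) p + dS i (dZb (logl lam)) p * dS k (dSb j (dZ (logl lam))) p) / complex_of_real (lam p)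
    + dS i (dZb (logl lam)) p * dSb j (dZ (logl lam)) p * dS k (logl lam) p / complex_of_real (lam p)
    + (- dS k (dZb (logl lam)) p / complex_of_real (lam p)) *
      (dS i (dSb j (dZ (logl lam))) p
       - (complex_of_real (lam p) * dS i (logl lam) p * dSb j (dZ (logl lam)) p + dS i (dZb (logl lam)) p * dZ (dSb j (dZ (logl lam))) p) / complex_of_real (lam p)
       + dS i (dZb (logl lam)) p * dSb j (dZ (logl lam)) p * dZ (logl lam) p / complex_of_real (lam p))"
proof -
  define L where "L = (\<lambda>p. complex_of_real (lam p))"
  define \<phi> where "\<phi> = logl lam"
  have sphi: "sm U \<phi>" unfolding \<phi>_def by (rule sm_phi[OF U pos sL])
  have Lnz: "\<And>q. q \<in> U \<Longrightarrow> L q \<noteq> 0" unfolding L_def using pos by auto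
  have rphi: "\<forall>x. cnj (\<phi> x) = \<phi> x" unfolding \<phi>_def logl_def by simp
  define P where "P = dS i (dSb j \<phi>)"
  define A where "A = dS i (dZb \<phi>)"
  define B where "B = dSb j (dZ \<phi>)"
  define E where "E q = P q - A q * B q / L q" for q
  have sP: "sm U P" unfolding P_def using sm_ops[OF U] sphi by blast
  have sA: "sm U A" unfolding A_def using sm_ops[OF U] sphi by blast
  have sB: "sm U B" unfolding B_def using sm_ops[OF U] sphi by blast
  have sL': "sm U L" unfolding L_def by (rule sL)
  have dP: "P differentiable (at p)" using sm_diff_at[OF sP U p] .
  have dA: "A differentiable (at p)" using sm_diff_at[OF sA U p] .
  have dB: "B differentiable (at p)" using sm_diff_at[OF sB U p] .
  have dL: "L differentiable (at p)" using sm_diff_at[OF sL' U p] .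
  have eE: "\<And>q. q \<in> U \<Longrightarrow> ecoef lam i j q = E q"
  proof -
    fix q assume q: "q \<in> U"
    have c: "cnj (dS j (dZb \<phi>) q) = B q" unfolding B_def by (rule conj_lemma[OF U q sphi rphi])
    have cL: "cnj (L q) = L q" unfolding L_def by simp
    have "cnj (acoef lam j q) = - B q / L q"
      unfolding acoef_def \<phi>_def[symmetric] using c by (simp add: L_def)
    moreover have "acoef lam i q = - A q / L q"
      unfolding acoef_def \<phi>_def[symmetric] A_def by (simp add: L_def)
    moreover have Lq: "complex_of_real (lam q) = L q" by (simp add: L_def)
    ultimately show "ecoef lam i j q = E q"
      unfolding ecoef_def gcoef_def E_def P_def \<phi>_def[symmetric]
      using Lnz[OF q] by (simp add: field_simps)
  qed
  have v: "vlift lam k (ecoef lam i j) p = dS k E p + acoef lam k p * dZ E p"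
    unfolding vlift_def dS_W dZ_W using W_local[OF U p eE] by simp
  have WE: "W c a b E p = W c a b P p - (W c a b A p * B p + A p * W c a b B p) / L p + A p * B p * W c a b L p / (L p * L p)" for c a b
    unfolding E_def[abs_def] by (rule W_E[OF dP dA dB dL Lnz[OF p]])
  have Lphi: "W c a b L p = L p * W c a b \<phi> p" for c a b
    unfolding \<phi>_def L_def using W_phi[OF U p pos dL[unfolded L_def]] Lnz[OF p] unfolding L_def by simp
  have ZA: "dZ A p = L p * dS i \<phi> p"
  proof -
    have "dZ A p = dS i (dZ (dZb \<phi>)) p"
      unfolding A_def dZ_fun dS_fun by (rule W_comm[OF U p]) (use sm_ops[OF U] sphi in blast)
    also have "\<dots> = dS i L p"
      unfolding dS_W by (rule W_local[OF U p]) (use curv in \<open>simp add: \<phi>_def L_def\<close>)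
    also have "\<dots> = L p * dS i \<phi> p" unfolding dS_W by (rule Lphi)
    finally show ?thesis .
  qed
  have ZP: "dZ P p = dS i B p"
  proof -
    have "dZ P p = dS i (dZ (dSb j \<phi>)) p"
      unfolding P_def dZ_fun dS_fun by (rule W_comm[OF U p]) (use sm_ops[OF U] sphi in blast)
    also have "\<dots> = dS i B p"
      unfolding dS_W
    proof (rule W_local[OF U p])
      fix q assume q: "q \<in> U"
      show "dZ (dSb j \<phi>) q = B q"
        unfolding B_def dZ_fun dSb_fun by (rule W_comm[OF U q sphi])
    qed
    finally show ?thesis .
  qed
  have ak: "acoef lam k p = - dS k (dZb \<phi>) p / L p"
    unfolding acoef_def \<phi>_def L_def by simp
  have Lp: "complex_of_real (lam p) = L p" by (simp add: L_def)
  show ?thesis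
    unfolding v ak Lp \<phi>_def[symmetric] L_def[symmetric] P_def[symmetric] A_def[symmetric] B_def[symmetric]
    unfolding dS_W dZ_W WE Lphi
    unfolding dS_W[symmetric] dZ_W[symmetric] ZA ZP
    using Lnz[OF p] by (simp add: field_simps)
qed



theorem lemma3p2:
  fixes lam :: "'n::finite pt \<Rightarrow> real" and U :: "'n pt set" and g :: nat
  assumes "g \<ge> 2" and "CARD('n) = 3 * g - 3"
    and "open U"
    and "\<forall>p\<in>U. lam p > 0"
    and "smooth_on U (\<lambda>p. complex_of_real (lam p))"
    and "\<forall>p\<in>U. dZ (dZb (logl lam)) p = complex_of_real (lam p)"
  shows "\<forall>i j k. \<forall>p\<in>U. vlift lam k (ecoef lam i j) p = vlift lam i (ecoef lam k j) p"
proof (intro allI ballI)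
  fix i j k p assume p: "p \<in> U"
  note U = assms(3)
  have sL: "sm U (\<lambda>p. complex_of_real (lam p))" by (rule smooth_sm[OF assms(5)])
  have sphi: "sm U (logl lam)" by (rule sm_phi[OF U assms(4) sL])
  have c1: "dS k (dS i (dSb j (logl lam))) p = dS i (dS k (dSb j (logl lam))) p"
    unfolding dS_fun by (rule W_comm[OF U p]) (use sm_ops[OF U] sphi in blast)
  have c2: "dS k (dS i (dZb (logl lam))) p = dS i (dS k (dZb (logl lam))) p"
    unfolding dS_fun by (rule W_comm[OF U p]) (use sm_ops[OF U] sphi in blast)
  have nz: "complex_of_real (lam p) \<noteq> 0" using assms(4) p by auto
  show "vlift lam k (ecoef lam i j) p = vlift lam i (ecoef lam k j) p"
    unfolding main_formula[OF U assms(4) sL assms(6) p] c1 c2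
    using nz by (simp add: field_simps)
qed


end
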